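(* Let $Y=\{(x,y)\in\mathbb{R}^2:(x/a)^2+y^2=1\}$ with $1<a\le\sqrt2$, and let $p\in Y$. The only local extrema of $d_p:Y\to\mathbb{R}$, $d_p(q)=d(p,q)$, are a global minimum at $p$ and a global maximum at $h^{-1}(p)$. Consequently, every nonempty intersection of $Y$ with a Euclidean ball centered at a point of $Y$ is either contractible or all of $Y$.
   Context: $d$ is the Euclidean metric on $\mathbb{R}^2$. $h:Y\to Y$ sends $p$ to the unique point of the intersection of the normal line to $Y$ at $p$ with $Y\setminus\{p\}$; for $1<a\le\sqrt2$ this map is a bijection, and $h^{-1}$ denotes its inverse. *)

theory Defs
  imports "HOL-Analysis.Analysis"
begin

text \<open>The ellipse Y = {(x,y). (x/a)^2 + y^2 = 1} in R^2 = real \<times> real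
  (the product metric on real \<times> real is the Euclidean metric).\<close>
definition ellipse :: "real \<Rightarrow> (real \<times> real) set" where
  "ellipse a = {(x, y). (x / a)^2 + y^2 = 1}"

text \<open>Normal line to the ellipse at p = (x,y): direction is the gradient
  of (x/a)^2 + y^2, i.e. proportional to (x/a^2, y).\<close>
definition normal_line :: "real \<Rightarrow> real \<times> real \<Rightarrow> (real \<times> real) set" where
  "normal_line a p = {(fst p + t * (fst p / a^2), snd p + t * snd p) | t. True}"

definition ell_h :: "real \<Rightarrow> real \<times> real \<Rightarrow> real \<times> real" where
  "ell_h a p = (THE q. q \<in> ellipse a \<and> q \<noteq> p \<and> q \<in> normal_line a p)"

definition ell_hinv :: "real \<Rightarrow> real \<times> real \<Rightarrow> real \<times> real" where
  "ell_hinv a = inv_into (ellipse a) (ell_h a)"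

definition local_min_on :: "'a::metric_space set \<Rightarrow> ('a \<Rightarrow> real) \<Rightarrow> 'a \<Rightarrow> bool" where
  "local_min_on S f q \<longleftrightarrow> q \<in> S \<and> (\<exists>e>0. \<forall>q'\<in>S. dist q' q < e \<longrightarrow> f q \<le> f q')"

definition local_max_on :: "'a::metric_space set \<Rightarrow> ('a \<Rightarrow> real) \<Rightarrow> 'a \<Rightarrow> bool" where
  "local_max_on S f q \<longleftrightarrow> q \<in> S \<and> (\<exists>e>0. \<forall>q'\<in>S. dist q' q < e \<longrightarrow> f q' \<le> f q)"

end

theory Submission
  imports Defs "HOL-Analysis.Analysis"
begin


lemma crossing_aux:
  fixes k k' :: "real \<Rightarrow> real" and L :: real
  assumes der: "\<And>v. (k has_real_derivative k' v) (at v)"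
    and k0: "k 0 > 0" and kL: "k L < 0" and nd: "\<And>v. 0 < v \<Longrightarrow> v < L \<Longrightarrow> k v = 0 \<Longrightarrow> k' v < 0"
    and x: "0 \<le> x" "x < y" "y \<le> L" "k x \<le> 0"
  shows "k y < 0"
proof (rule ccontr)
  assume "\<not> k y < 0"
  hence ky: "k y \<ge> 0" by simp
  have cont: "continuous_on UNIV k"
    using der by (meson DERIV_isCont continuous_at_imp_continuous_on)
  have x0: "0 < x" using x k0 by (metis less_eq_real_def not_le)
  obtain x' where x': "x \<le> x'" "x' < y" "k x' < 0"
  proof (cases "k x < 0")
    case True then show ?thesis using that x by auto
  next
    case False
    hence "k x = 0" using x by simp
    hence "k' x < 0" using nd x0 x by simp
    then obtain d where d: "d > 0" "\<forall>h>0. h < d \<longrightarrow> k x > k (x + h)"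
      using DERIV_neg_dec_right[OF der] by blast
    define h where "h = min (d/2) ((y - x)/2)"
    have "h \<le> (y - x)/2" "h \<le> d/2" unfolding h_def by (rule min.cobounded2, rule min.cobounded1)
    hence "h > 0" "h < d" "x + h < y" using d x by (auto simp: h_def)
    then show ?thesis using that[of "x + h"] d \<open>k x = 0\<close> by auto
  qed
  define T where "T = {t. x' \<le> t \<and> t \<le> y \<and> 0 \<le> k t}"
  have Tc: "closed T" unfolding T_def
    by (intro closed_Collect_conj closed_Collect_le cont continuous_intros)
  have "y \<in> T" using x' ky by (simp add: T_def)
  hence Tne: "T \<noteq> {}" by auto
  have Tb: "bdd_below T" unfolding T_def by (rule bdd_belowI[of _ x']) auto
  define t0 where "t0 = Inf T"
  have t0T: "t0 \<in> T" using closed_contains_Inf[OF Tne Tb Tc] by (simp add: t0_def)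
  have below: "k t < 0" if "x' \<le> t" "t < t0" for t
  proof (rule ccontr)
    assume "\<not> k t < 0"
    hence "t \<in> T" using that t0T by (auto simp: T_def)
    hence "t0 \<le> t" unfolding t0_def using Tb by (simp add: cInf_lower)
    thus False using that by simp
  qed
  have t0gt: "x' < t0" using t0T x' by (auto simp: T_def less_eq_real_def)
  have kt0: "k t0 = 0"
  proof (rule ccontr)
    assume "k t0 \<noteq> 0"
    hence "k t0 > 0" using t0T by (auto simp: T_def)
    then obtain t1 where "x' \<le> t1" "t1 \<le> t0" "k t1 = 0"
      using IVT'[of k x' 0 t0] x' t0gt continuous_on_subset[OF cont] by fastforce
    moreover have "t1 \<noteq> t0" using \<open>k t0 > 0\<close> \<open>k t1 = 0\<close> by auto
    ultimately show False using below by fastforce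
  qed
  have "0 < t0" "t0 < L" using t0T x' x0 x kt0 kL by (auto simp: T_def less_eq_real_def)
  hence "k' t0 < 0" using nd kt0 by simp
  then obtain d where d: "d > 0" "\<forall>h>0. h < d \<longrightarrow> k t0 < k (t0 - h)"
    using DERIV_neg_dec_left[OF der] by blast
  define h where "h = min (d/2) ((t0 - x')/2)"
  have "h \<le> (t0 - x')/2" "h \<le> d/2" unfolding h_def by (rule min.cobounded2, rule min.cobounded1)
  hence "h > 0" "h < d" "x' \<le> t0 - h" "t0 - h < t0" using d t0gt by (auto simp: h_def)
  thus False using d below[of "t0 - h"] kt0 by auto
qed

lemma crossing:
  fixes k k' :: "real \<Rightarrow> real" and L :: real
  assumes der: "\<And>v. (k has_real_derivative k' v) (at v)"
    and k0: "k 0 > 0" and kL: "k L < 0" and L: "0 < L"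
    and nd: "\<And>v. 0 < v \<Longrightarrow> v < L \<Longrightarrow> k v = 0 \<Longrightarrow> k' v < 0"
  shows "\<exists>z. 0 < z \<and> z < L \<and> k z = 0 \<and> (\<forall>v. 0 \<le> v \<and> v < z \<longrightarrow> k v > 0) \<and> (\<forall>v. z < v \<and> v \<le> L \<longrightarrow> k v < 0)"
proof -
  have cont: "continuous_on UNIV k"
    using der by (meson DERIV_isCont continuous_at_imp_continuous_on)
  obtain z where z: "0 \<le> z" "z \<le> L" "k z = 0"
    using IVT2'[of k L 0 0] k0 kL L continuous_on_subset[OF cont] by fastforce
  have z0: "0 < z" "z < L" using z k0 kL by (auto simp: less_eq_real_def)
  show ?thesis
  proof (intro exI conjI allI impI)
    fix v assume "0 \<le> v \<and> v < z"
    thus "k v > 0" using crossing_aux[where k=k and k'=k' and L=L and x=v and y=z] der k0 kL nd z by force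
  next
    fix v assume "z < v \<and> v \<le> L"
    thus "k v < 0" using crossing_aux[where k=k and k'=k' and L=L and x=z and y=v] der k0 kL nd z by force
  qed (use z0 z in auto)
qed


lemma cos_3pi: "cos (x + 3 * pi) = - cos (x::real)" "sin (x + 3 * pi) = - sin x"
  by (simp_all add: cos_add sin_add)

lemma key_alg:
  fixes A B c s cw sv :: real
  assumes "B * cw = A * c" "s^2 + cw^2 = 1" "A = B + 2" "sv^2 = 1 - c^2"
  shows "(A * sv)^2 - (3 * B * s)^2 = (2 - 2 * B) * (2 + 4 * B) + 8 * A^2 * c ^ 2"
proof -
  have "(3 * B * s)^2 = 9 * B^2 * s^2" by (simp add: power_mult_distrib)
  also have "\<dots> = 9 * B^2 - 9 * (B * cw)^2" using assms(2) by algebra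
  finally have e1: "(3 * B * s)^2 = 9 * B^2 - 9 * (A * c)^2" using assms(1) by simp
  show ?thesis unfolding e1 using assms(3,4) unfolding power_mult_distrib by algebra
qed

lemma k_crossing:
  fixes a u :: real
  assumes a1: "1 < a" and a2: "a \<le> sqrt 2"
  defines "K \<equiv> \<lambda>v. (a^2 + 1) * cos v - (a^2 - 1) * cos (2 * u + 3 * v)"
  shows "\<exists>z. 0 < z \<and> z < pi \<and> K z = 0 \<and> (\<forall>v. 0 \<le> v \<and> v < z \<longrightarrow> K v > 0) \<and> (\<forall>v. z < v \<and> v \<le> pi \<longrightarrow> K v < 0)"
proof -
  have asq: "a^2 \<le> 2"
  proof -
    have "a^2 \<le> (sqrt 2)^2" using a2 a1 by (intro power_mono) auto
    thus ?thesis by simp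
  qed
  have asq1: "a^2 > 1" using a1 by (simp add: one_less_power)
  show ?thesis
  proof (cases "a^2 = 2 \<and> cos (2 * u) = -1")
    case True
    have s2: "sin (2 * u) = 0" using True sin_cos_squared_add[of "2*u"] by simp
    have Kv: "K v = 4 * cos v ^ 3" for v
    proof -
      have "cos (2 * u + 3 * v) = - cos (3 * v)" using True s2 by (simp add: cos_add)
      thus ?thesis using True by (simp add: K_def cos_treble_cos)
    qed
    show ?thesis
    proof (intro exI conjI allI impI)
      fix v assume "0 \<le> v \<and> v < pi / 2"
      hence "cos v > 0" by (intro cos_gt_zero_pi) auto
      thus "K v > 0" by (simp add: Kv)
    next
      fix v assume "pi / 2 < v \<and> v \<le> pi"
      hence "cos v < 0" by (intro cos_lt_zero_pi) auto
      thus "K v < 0" by (simp add: Kv power3_eq_cube mult_pos_neg mult_neg_neg)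
    qed (auto simp: Kv)
  next
    case nd: False
    define K' where "K' = (\<lambda>v. - (a^2 + 1) * sin v + 3 * (a^2 - 1) * sin (2 * u + 3 * v))"
    have der: "(K has_real_derivative K' v) (at v)" for v
      unfolding K_def K'_def by (auto intro!: derivative_eq_intros simp: algebra_simps)
    have K0: "K 0 > 0"
    proof -
      have "(a^2 - 1) * cos (2 * u) \<le> (a^2 - 1) * 1" using asq1 by (intro mult_left_mono) auto
      thus ?thesis by (simp add: K_def)
    qed
    have KL: "K pi < 0"
    proof -
      have "(a^2 - 1) * cos (2 * u) \<le> (a^2 - 1) * 1" using asq1 by (intro mult_left_mono) auto
      moreover have "cos (2 * u + 3 * pi) = - cos (2 * u)" by (rule cos_3pi)
      ultimately show ?thesis by (simp add: K_def)
    qed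
    have ndv: "K' v < 0" if v: "0 < v" "v < pi" and Kz: "K v = 0" for v
    proof -
      define B where "B = a^2 - 1"
      define A where "A = a^2 + 1"
      define w where "w = 2 * u + 3 * v"
      have AB: "A = B + 2" "0 < B" "B \<le> 1" using asq asq1 by (auto simp: A_def B_def)
      have sv: "sin v > 0" using v by (simp add: sin_gt_zero)
      have eq: "B * cos w = A * cos v" using Kz by (simp add: K_def A_def B_def w_def)
      have K'v: "K' v = - A * sin v + 3 * B * sin w" by (simp add: K'_def A_def B_def w_def)
      show ?thesis
      proof (cases "sin w \<le> 0")
        case True
        have "A * sin v > 0" using sv AB by simp
        moreover have "B * sin w \<le> 0" using True AB by (simp add: mult_nonneg_nonpos)
        ultimately show ?thesis by (simp add: K'v)
      next
        case False
        hence sw: "sin w > 0" by simp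
        have key: "(3 * B * sin w)^2 < (A * sin v)^2"
        proof -
          have diff: "(A * sin v)^2 - (3 * B * sin w)^2 = (2 - 2 * B) * (2 + 4 * B) + 8 * A^2 * cos v ^ 2"
            using key_alg[OF eq sin_cos_squared_add[of w] AB(1) sin_squared_eq[of v]] .
          have pos: "(2 - 2 * B) * (2 + 4 * B) + 8 * A^2 * cos v ^ 2 > 0"
          proof (cases "B = 1 \<and> cos v = 0")
            case True
            have cw: "cos w = 0" using eq True by simp
            have "sin w ^ 2 = 1" using sin_cos_squared_add[of w] cw by simp
            hence sw1: "sin w = 1" using sw by (auto simp: power2_eq_1_iff)
            have "sin v ^ 2 = 1" using sin_cos_squared_add[of v] True by simp
            hence sv1: "sin v = 1" using sv by (auto simp: power2_eq_1_iff)
            have c3: "cos (3 * v) = 0" using True by (simp add: cos_treble_cos)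
            have s3: "sin (3 * v) = -1"
            proof -
              have "sin (3 * v) = sin (2 * v + v)" by simp
              also have "\<dots> = -1" unfolding sin_add sin_double cos_double using True sv1 by simp
              finally show ?thesis .
            qed
            have "sin w = - cos (2 * u)" unfolding w_def sin_add using c3 s3 by simp
            hence "cos (2 * u) = -1" using sw1 by simp
            moreover have "a^2 = 2" using True by (simp add: B_def)
            ultimately show ?thesis using nd by simp
          next
            case False
            show ?thesis
            proof (cases "B = 1")
              case True
              hence "cos v \<noteq> 0" using False by simp
              hence "cos v ^ 2 > 0" by simp
              hence "8 * A^2 * cos v ^ 2 > 0" using AB by simp
              thus ?thesis using True by simp
            next
              case False
              hence "(2 - 2 * B) * (2 + 4 * B) > 0" using AB by (intro mult_pos_pos) auto
              moreover have "8 * A^2 * cos v ^ 2 \<ge> 0" by simp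
              ultimately show ?thesis by linarith
            qed
          qed
          show ?thesis using diff pos by linarith
        qed
        have "3 * B * sin w < A * sin v"
        proof (rule power2_less_imp_less[OF key])
          have "A > 0" using AB by simp
          thus "0 \<le> A * sin v" using sv by simp
        qed
        thus ?thesis by (simp add: K'v)
      qed
    qed
    show ?thesis by (rule crossing[OF der K0 KL pi_gt_zero ndv])
  qed
qed


lemma trig_id:
  fixes a u v :: real
  shows "4 * (a * (a * cos u - a * cos (u + 2 * v)) * sin (u + 2 * v) - (sin u - sin (u + 2 * v)) * cos (u + 2 * v))
     = 4 * sin v * ((a ^ 2 + 1) * cos v - (a ^ 2 - 1) * cos (2 * u + 3 * v))"
proof -
  have e1: "cos (u + 2 * v) = cos u * (cos v ^ 2 - sin v ^ 2) - sin u * (2 * sin v * cos v)"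
    by (simp add: cos_add cos_double sin_double)
  have e2: "sin (u + 2 * v) = sin u * (cos v ^ 2 - sin v ^ 2) + cos u * (2 * sin v * cos v)"
    by (simp add: sin_add cos_double sin_double)
  have e3: "cos (2 * u + 3 * v) = cos (u + 2 * v) * cos (u + v) - sin (u + 2 * v) * sin (u + v)"
    using cos_add[of "u + 2 * v" "u + v"] by (simp add: algebra_simps)
  have e4: "cos (u + v) = cos u * cos v - sin u * sin v" by (simp add: cos_add)
  have e5: "sin (u + v) = sin u * cos v + cos u * sin v" by (simp add: sin_add)
  have pu: "sin u ^ 2 + cos u ^ 2 = 1" by simp
  have pv: "sin v ^ 2 + cos v ^ 2 = 1" by simp
  show ?thesis unfolding e3 e4 e5 unfolding e1 e2 using pu pv by algebra
qed

lemma ell_mem: "q \<in> ellipse a \<longleftrightarrow> (fst q / a)^2 + (snd q)^2 = 1"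
  by (cases q) (simp add: ellipse_def)

lemma normal_mem: "q \<in> normal_line a x \<longleftrightarrow> (\<exists>s. q = (fst x + s * (fst x / a^2), snd x + s * snd x))"
  by (auto simp: normal_line_def)

lemma normal_crit:
  fixes a t u :: real
  assumes "a > 0"
  shows "(a * cos u, sin u) \<in> normal_line a (a * cos t, sin t) \<longleftrightarrow>
         a * (a * cos u - a * cos t) * sin t - (sin u - sin t) * cos t = 0"
proof
  assume "(a * cos u, sin u) \<in> normal_line a (a * cos t, sin t)"
  then obtain s where s: "a * cos u = a * cos t + s * (a * cos t / a^2)" "sin u = sin t + s * sin t"
    by (auto simp: normal_mem)
  have "a * cos u - a * cos t = s * cos t / a" using s(1) assms by (simp add: power2_eq_square)
  hence "a * (a * cos u - a * cos t) = s * cos t" using assms by simp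
  moreover have "sin u - sin t = s * sin t" using s(2) by simp
  ultimately show "a * (a * cos u - a * cos t) * sin t - (sin u - sin t) * cos t = 0" by simp
next
  assume crit: "a * (a * cos u - a * cos t) * sin t - (sin u - sin t) * cos t = 0"
  define dx where "dx = a * cos u - a * cos t"
  define dy where "dy = sin u - sin t"
  define s where "s = a * dx * cos t + dy * sin t"
  have c: "a * dx * sin t = dy * cos t" using crit by (simp add: dx_def dy_def)
  have pt: "sin t ^ 2 + cos t ^ 2 = 1" by simp
  have h1: "s * cos t = a * dx" unfolding s_def using c pt by algebra
  have h2: "s * sin t = dy" unfolding s_def using c pt by algebra
  have "a * cos u = a * cos t + s * (a * cos t / a^2)"
  proof -
    have "s * (a * cos t / a^2) = (s * cos t) / a" using assms by (simp add: power2_eq_square)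
    also have "\<dots> = dx" using h1 assms by simp
    finally show ?thesis by (simp add: dx_def)
  qed
  moreover have "sin u = sin t + s * sin t" using h2 by (simp add: dy_def)
  ultimately show "(a * cos u, sin u) \<in> normal_line a (a * cos t, sin t)"
    unfolding normal_mem by auto
qed



lemma core:
  fixes a :: real and p :: "real \<times> real"
  assumes a1: "1 < a" and a2: "a \<le> sqrt 2" and p: "p \<in> ellipse a"
  obtains Q :: "real \<Rightarrow> real \<times> real" and z where
   "continuous_on UNIV Q" "\<And>v. Q v \<in> ellipse a" "\<And>v. Q (v + pi) = Q v" "Q 0 = p" "0 < z" "z < pi"
   "\<And>q. q \<in> ellipse a \<Longrightarrow> \<exists>v. 0 \<le> v \<and> v < pi \<and> q = Q v"
   "\<And>x y. 0 \<le> x \<Longrightarrow> x < y \<Longrightarrow> y \<le> z \<Longrightarrow> dist p (Q x) < dist p (Q y)"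
   "\<And>x y. z \<le> x \<Longrightarrow> x < y \<Longrightarrow> y \<le> pi \<Longrightarrow> dist p (Q y) < dist p (Q x)"
   "\<And>v. 0 < v \<Longrightarrow> v < pi \<Longrightarrow> p \<in> normal_line a (Q v) \<Longrightarrow> v = z"
   "p \<in> normal_line a (Q z)"
proof -
  have a0: "a > 0" using a1 by simp
  obtain x0 y0 where pxy: "p = (x0, y0)" by (cases p)
  have "(x0 / a)^2 + y0^2 = 1" using p by (simp add: ell_mem pxy)
  then obtain u where u: "x0 / a = cos u" "y0 = sin u" using sincos_total_2pi by metis
  have pu: "p = (a * cos u, sin u)" using u a0 pxy by (simp add: field_simps)
  define Q where "Q = (\<lambda>v. (a * cos (u + 2 * v), sin (u + 2 * v)))"
  define F where "F = (\<lambda>v. (a * cos u - a * cos (u + 2 * v))^2 + (sin u - sin (u + 2 * v))^2)"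
  define K where "K = (\<lambda>v. (a^2 + 1) * cos v - (a^2 - 1) * cos (2 * u + 3 * v))"
  obtain z where z: "0 < z" "z < pi" "K z = 0" "\<And>v. 0 \<le> v \<Longrightarrow> v < z \<Longrightarrow> K v > 0"
    "\<And>v. z < v \<Longrightarrow> v \<le> pi \<Longrightarrow> K v < 0"
    using k_crossing[OF a1 a2, of u] unfolding K_def by blast
  have distF: "dist p (Q v) = sqrt (F v)" for v
    by (simp add: pu Q_def F_def dist_Pair_Pair dist_real_def)
  have Gid: "4 * (a * (a * cos u - a * cos (u + 2 * v)) * sin (u + 2 * v) - (sin u - sin (u + 2 * v)) * cos (u + 2 * v))
     = 4 * sin v * K v" for v
    unfolding K_def by (rule trig_id)
  have derF: "(F has_real_derivative 4 * sin v * K v) (at v)" for v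
  proof -
    have "(F has_real_derivative 4 * (a * (a * cos u - a * cos (u + 2 * v)) * sin (u + 2 * v) - (sin u - sin (u + 2 * v)) * cos (u + 2 * v))) (at v)"
      unfolding F_def by (auto intro!: derivative_eq_intros simp: algebra_simps)
    thus ?thesis using Gid by simp
  qed
  have contF: "continuous_on S F" for S
    using derF by (meson DERIV_isCont continuous_at_imp_continuous_on)
  have Finc: "F x < F y" if "0 \<le> x" "x < y" "y \<le> z" for x y
  proof (rule DERIV_pos_imp_increasing_open[OF that(2) _ contF])
    fix t assume t: "x < t" "t < y"
    have "sin t > 0" using t that z by (intro sin_gt_zero) auto
    moreover have "K t > 0" using t that by (intro z(4)) auto
    ultimately show "\<exists>y. (F has_real_derivative y) (at t) \<and> 0 < y" using derF by (intro exI[of _ "4 * sin t * K t"] conjI) auto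
  qed
  have Fdec: "F y < F x" if "z \<le> x" "x < y" "y \<le> pi" for x y
  proof (rule DERIV_neg_imp_decreasing_open[OF that(2) _ contF])
    fix t assume t: "x < t" "t < y"
    have "sin t > 0" using t that z by (intro sin_gt_zero) auto
    moreover have "K t < 0" using t that by (intro z(5)) auto
    ultimately show "\<exists>y. (F has_real_derivative y) (at t) \<and> y < 0" using derF
      by (intro exI[of _ "4 * sin t * K t"] conjI) (auto simp: mult_pos_neg)
  qed
  have crit: "p \<in> normal_line a (Q v) \<longleftrightarrow> sin v * K v = 0" for v
  proof -
    have "p \<in> normal_line a (Q v) \<longleftrightarrow>
      a * (a * cos u - a * cos (u + 2 * v)) * sin (u + 2 * v) - (sin u - sin (u + 2 * v)) * cos (u + 2 * v) = 0"
      unfolding pu Q_def by (rule normal_crit[OF a0])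
    also have "\<dots> \<longleftrightarrow> sin v * K v = 0"
    proof -
      have "4 * (a * (a * cos u - a * cos (u + 2 * v)) * sin (u + 2 * v) - (sin u - sin (u + 2 * v)) * cos (u + 2 * v))
        = 4 * (sin v * K v)" using Gid[of v] by (simp add: mult.assoc)
      hence "a * (a * cos u - a * cos (u + 2 * v)) * sin (u + 2 * v) - (sin u - sin (u + 2 * v)) * cos (u + 2 * v)
        = sin v * K v" by (metis mult_cancel_left zero_neq_numeral)
      thus ?thesis by (simp only:)
    qed
    finally show ?thesis .
  qed
  show ?thesis
  proof (rule that[of Q z])
    show "continuous_on UNIV Q" unfolding Q_def by (intro continuous_intros)
    show "Q v \<in> ellipse a" for v using a0 by (simp add: Q_def ell_mem)
    show "Q (v + pi) = Q v" for v
    proof -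
      have "u + 2 * (v + pi) = (u + 2 * v) + 2 * pi" by (simp add: algebra_simps)
      thus ?thesis unfolding Q_def by (simp only: sin_periodic cos_periodic)
    qed
    show "Q 0 = p" by (simp add: Q_def pu)
    show "0 < z" "z < pi" using z by auto
    show "\<exists>v. 0 \<le> v \<and> v < pi \<and> q = Q v" if q: "q \<in> ellipse a" for q
    proof -
      obtain x y where qxy: "q = (x, y)" by (cases q)
      have e: "(x / a)^2 + y^2 = 1" using q by (simp add: ell_mem qxy)
      define c' where "c' = (x / a) * cos u + y * sin u"
      define s' where "s' = y * cos u - (x / a) * sin u"
      have pu2: "sin u ^ 2 + cos u ^ 2 = 1" by simp
      have "c'^2 + s'^2 = 1" unfolding c'_def s'_def using e pu2 by algebra
      then obtain th where th: "0 \<le> th" "th < 2 * pi" "c' = cos th" "s' = sin th"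
        using sincos_total_2pi by metis
      have "cos (u + th) = x / a" unfolding cos_add th(3,4)[symmetric] c'_def s'_def using pu2 by algebra
      hence cx: "a * cos (u + th) = x" using a0 by simp
      have sy: "sin (u + th) = y" unfolding sin_add th(3,4)[symmetric] c'_def s'_def using pu2 by algebra
      show ?thesis
        by (rule exI[of _ "th / 2"]) (use th cx sy in \<open>auto simp: Q_def qxy\<close>)
    qed
    show "dist p (Q x) < dist p (Q y)" if "0 \<le> x" "x < y" "y \<le> z" for x y
      unfolding distF using Finc[OF that] by (simp add: F_def)
    show "dist p (Q y) < dist p (Q x)" if "z \<le> x" "x < y" "y \<le> pi" for x y
      unfolding distF using Fdec[OF that] by (simp add: F_def)
    show "v = z" if v: "0 < v" "v < pi" "p \<in> normal_line a (Q v)" for v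
    proof -
      have "sin v > 0" using v by (intro sin_gt_zero) auto
      hence "K v = 0" using crit[of v] v by simp
      thus ?thesis using z(4)[of v] z(5)[of v] v by (cases "v < z"; cases "z < v") auto
    qed
    show "p \<in> normal_line a (Q z)" using crit[of z] z by simp
  qed
qed


lemma normal_unique:
  fixes a :: real and x :: "real \<times> real"
  assumes a0: "a > 0" and x: "x \<in> ellipse a"
  shows "\<exists>!q. q \<in> ellipse a \<and> q \<noteq> x \<and> q \<in> normal_line a x"
proof -
  obtain X Y where xXY: "x = (X, Y)" by (cases x)
  define A where "A = (X / a)^2"
  define B where "B = Y^2"
  define c where "c = 1 / a^2"
  have AB: "A + B = 1" using x by (simp add: ell_mem xXY A_def B_def)
  have A0: "A \<ge> 0" "B \<ge> 0" by (simp_all add: A_def B_def)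
  have c0: "c > 0" using a0 by (simp add: c_def)
  define N where "N = (\<lambda>s::real. (X + s * (X / a^2), Y + s * Y))"
  have nl: "q \<in> normal_line a x \<longleftrightarrow> (\<exists>s. q = N s)" for q
    by (simp add: normal_mem xXY N_def)
  have Ne: "N s \<in> ellipse a \<longleftrightarrow> s * (s * (A * c^2 + B) + 2 * (A * c + B)) = 0" for s
  proof -
    have h1: "((X + s * (X / a^2)) / a)^2 = A * (1 + s * c)^2"
      using a0 by (simp add: A_def c_def field_simps power2_eq_square)
    have h2: "(Y + s * Y)^2 = B * (1 + s)^2" by (simp add: B_def field_simps power2_eq_square)
    have h3: "A * (1 + s * c)^2 + B * (1 + s)^2 - 1 = s * (s * (A * c^2 + B) + 2 * (A * c + B))"
      using AB by algebra
    have "N s \<in> ellipse a \<longleftrightarrow> A * (1 + s * c)^2 + B * (1 + s)^2 = 1"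
      unfolding ell_mem N_def fst_conv snd_conv h1 h2 by (rule refl)
    thus ?thesis using h3 by (metis eq_iff_diff_eq_0)
  qed
  have XY0: "X \<noteq> 0 \<or> Y \<noteq> 0" using AB by (auto simp: A_def B_def)
  have Nx: "N s \<noteq> x \<longleftrightarrow> s \<noteq> 0" for s
    using XY0 a0 by (auto simp: N_def xXY)
  have D0: "A * c^2 + B > 0"
  proof (cases "A = 0")
    case True thus ?thesis using AB by simp
  next
    case False thus ?thesis using A0 c0 by (simp add: add_pos_nonneg)
  qed
  have E0: "A * c + B > 0"
  proof (cases "A = 0")
    case True thus ?thesis using AB by simp
  next
    case False thus ?thesis using A0 c0 by (simp add: add_pos_nonneg)
  qed
  define s0 where "s0 = - 2 * (A * c + B) / (A * c^2 + B)"
  have s0eq: "s0 * (A * c^2 + B) + 2 * (A * c + B) = 0" using D0 by (simp add: s0_def)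
  have s0n: "s0 \<noteq> 0" using D0 E0 by (simp add: s0_def)
  have uniq: "s = s0" if "s \<noteq> 0" "N s \<in> ellipse a" for s
  proof -
    have "s * (A * c^2 + B) + 2 * (A * c + B) = 0" using that Ne by simp
    thus ?thesis using D0 by (simp add: s0_def field_simps)
  qed
  show ?thesis
  proof (rule ex1I[of _ "N s0"])
    show "N s0 \<in> ellipse a \<and> N s0 \<noteq> x \<and> N s0 \<in> normal_line a x"
      using Ne[of s0] s0eq s0n Nx nl by auto
  next
    fix q assume q: "q \<in> ellipse a \<and> q \<noteq> x \<and> q \<in> normal_line a x"
    then obtain s where s: "q = N s" using nl by blast
    have "s \<noteq> 0" using q s Nx by auto
    thus "q = N s0" using uniq q s by auto
  qed
qed


lemma sph_mem: "z \<in> sphere (0::real \<times> real) 1 \<longleftrightarrow> (fst z)^2 + (snd z)^2 = 1"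
proof -
  obtain x y where z: "z = (x, y)" by (cases z)
  have "norm z = sqrt (x^2 + y^2)" by (simp add: z norm_prod_def)
  thus ?thesis by (simp add: z)
qed

lemma norm1_iff: "norm (z::real \<times> real) = 1 \<longleftrightarrow> (fst z)^2 + (snd z)^2 = 1"
  using sph_mem[of z] by simp

lemma ell_contr:
  fixes a :: real and S :: "(real \<times> real) set"
  assumes a0: "a > 0" and q0: "q0 \<in> ellipse a" and S: "S \<subseteq> ellipse a - {q0}" and conn: "connected S"
  shows "contractible S"
proof -
  define L where "L = (\<lambda>z::real \<times> real. (a * fst z, snd z))"
  define Li where "Li = (\<lambda>z::real \<times> real. (fst z / a, snd z))"
  have b: "Li q0 \<in> sphere 0 1" using q0 by (simp add: norm1_iff ell_mem Li_def)
  have h1: "homeomorphism (sphere 0 1 - {Li q0}) (ellipse a - {q0}) L Li"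
  proof (rule homeomorphismI)
    show "continuous_on (sphere 0 1 - {Li q0}) L" unfolding L_def by (intro continuous_intros)
    show "continuous_on (ellipse a - {q0}) Li" unfolding Li_def using a0 by (intro continuous_intros) auto
    show "L ` (sphere 0 1 - {Li q0}) \<subseteq> ellipse a - {q0}"
    proof
      fix w assume "w \<in> L ` (sphere 0 1 - {Li q0})"
      then obtain z where z: "z \<in> sphere 0 1" "z \<noteq> Li q0" "w = L z" by blast
      have "w \<in> ellipse a" using z a0 by (simp add: norm1_iff ell_mem L_def)
      moreover have "w \<noteq> q0"
      proof
        assume "w = q0"
        hence "Li w = Li q0" by simp
        moreover have "Li w = z" using z a0 by (simp add: L_def Li_def)
        ultimately show False using z by simp
      qed
      ultimately show "w \<in> ellipse a - {q0}" by simp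
    qed
    show "Li ` (ellipse a - {q0}) \<subseteq> sphere 0 1 - {Li q0}"
    proof
      fix w assume "w \<in> Li ` (ellipse a - {q0})"
      then obtain z where z: "z \<in> ellipse a" "z \<noteq> q0" "w = Li z" by blast
      have "w \<in> sphere 0 1" using z by (simp add: norm1_iff ell_mem Li_def)
      moreover have "w \<noteq> Li q0"
      proof
        assume "w = Li q0"
        hence "L w = L (Li q0)" by simp
        moreover have "L w = z" "L (Li q0) = q0" using z a0 by (simp_all add: L_def Li_def)
        ultimately show False using z by simp
      qed
      ultimately show "w \<in> sphere 0 1 - {Li q0}" by simp
    qed
    show "Li (L x) = x" for x using a0 by (simp add: L_def Li_def)
    show "L (Li y) = y" for y using a0 by (simp add: L_def Li_def)
  qed
  have h2: "(sphere 0 1 - {Li q0}) homeomorphic {x :: real \<times> real. (0, 1) \<bullet> x = 0}"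
    by (rule homeomorphic_punctured_sphere_hyperplane[OF zero_less_one b]) (simp add: prod_eq_iff)
  have h3: "{x :: real \<times> real. (0, 1) \<bullet> x = 0} homeomorphic (UNIV :: real set)"
    unfolding homeomorphic_def
  proof (intro exI)
    show "homeomorphism {x :: real \<times> real. (0, 1) \<bullet> x = 0} UNIV fst (\<lambda>r. (r, 0))"
    proof (rule homeomorphismI)
      show "continuous_on {x :: real \<times> real. (0, 1) \<bullet> x = 0} fst" by (intro continuous_intros)
      show "continuous_on UNIV (\<lambda>r::real. (r, 0::real))" by (intro continuous_intros)
      show "fst ` {x :: real \<times> real. (0, 1) \<bullet> x = 0} \<subseteq> UNIV" by simp
      show "(\<lambda>r::real. (r, 0::real)) ` UNIV \<subseteq> {x :: real \<times> real. (0, 1) \<bullet> x = 0}" by auto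
      show "(fst x, 0) = x" if "x \<in> {x :: real \<times> real. (0, 1) \<bullet> x = 0}" for x
        using that by (cases x) auto
      show "fst (y, 0::real) = y" for y :: real by simp
    qed
  qed
  have "(ellipse a - {q0}) homeomorphic (UNIV :: real set)"
  proof -
    have "(sphere 0 1 - {Li q0}) homeomorphic (ellipse a - {q0})" using h1 homeomorphic_def by blast
    hence "(ellipse a - {q0}) homeomorphic (sphere 0 1 - {Li q0})" by (rule homeomorphic_sym[THEN iffD1])
    thus ?thesis by (rule homeomorphic_trans[OF homeomorphic_trans[OF _ h2] h3])
  qed
  then obtain f g where fg: "homeomorphism (ellipse a - {q0}) (UNIV :: real set) f g"
    unfolding homeomorphic_def by blast
  have hS: "homeomorphism S (f ` S) f g"
    by (rule homeomorphism_of_subsets[OF fg S subset_UNIV refl])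
  have "continuous_on (ellipse a - {q0}) f" using fg by (rule homeomorphism_cont1)
  hence "continuous_on S f" using S by (rule continuous_on_subset)
  hence "connected (f ` S)" using conn by (rule connected_continuous_image)
  hence "is_interval (f ` S)" by (simp only: is_interval_connected_1)
  hence c: "contractible (f ` S)" by (simp only: is_interval_contractible_1)
  have "S homeomorphic (f ` S)" unfolding homeomorphic_def using hS by blast
  hence "(f ` S) homeomorphic S" by (rule homeomorphic_sym[THEN iffD1])
  with c show ?thesis by (rule homeomorphic_contractible)
qed


lemma near:
  fixes Q :: "real \<Rightarrow> real \<times> real"
  assumes "continuous_on UNIV Q" "e > 0"
  shows "\<exists>d>0. \<forall>w. \<bar>w - v\<bar> < d \<longrightarrow> dist (Q w) (Q v) < e"
proof -
  have "continuous (at v) Q" using assms(1) by (simp add: continuous_on_eq_continuous_at)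
  thus ?thesis using assms(2) unfolding continuous_at_eps_delta by (simp add: dist_real_def)
qed

lemma sublevel:
  fixes a :: real and c :: "real \<times> real" and P :: "real \<Rightarrow> bool"
  assumes a1: "1 < a" and a2: "a \<le> sqrt 2" and c: "c \<in> ellipse a"
    and P: "\<And>x y. x \<le> y \<Longrightarrow> P y \<Longrightarrow> P x"
  shows "contractible {q \<in> ellipse a. P (dist c q)} \<or> {q \<in> ellipse a. P (dist c q)} = ellipse a"
proof -
  obtain Q z where
   Qc: "continuous_on UNIV Q" and Qe: "\<And>v. Q v \<in> ellipse a" and Qper: "\<And>v. Q (v + pi) = Q v"
   and Q0: "Q 0 = c" and z: "0 < z" "z < pi"
   and cover: "\<And>q. q \<in> ellipse a \<Longrightarrow> \<exists>v. 0 \<le> v \<and> v < pi \<and> q = Q v"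
   and inc: "\<And>x y. 0 \<le> x \<Longrightarrow> x < y \<Longrightarrow> y \<le> z \<Longrightarrow> dist c (Q x) < dist c (Q y)"
   and dec: "\<And>x y. z \<le> x \<Longrightarrow> x < y \<Longrightarrow> y \<le> pi \<Longrightarrow> dist c (Q y) < dist c (Q x)"
   and "\<And>v. 0 < v \<Longrightarrow> v < pi \<Longrightarrow> c \<in> normal_line a (Q v) \<Longrightarrow> v = z"
   and "c \<in> normal_line a (Q z)"
    by (rule core[OF a1 a2 c]) blast
  have inc': "dist c (Q x) \<le> dist c (Q y)" if "0 \<le> x" "x \<le> y" "y \<le> z" for x y
    using inc[of x y] that by (cases "x = y") auto
  have dec': "dist c (Q y) \<le> dist c (Q x)" if "z \<le> x" "x \<le> y" "y \<le> pi" for x y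
    using dec[of x y] that by (cases "x = y") auto
  have maxz: "dist c q \<le> dist c (Q z)" if qY: "q \<in> ellipse a" for q
  proof -
    obtain v where v: "0 \<le> v" "v < pi" "q = Q v" using cover[OF qY] by blast
    show ?thesis
    proof (cases "v \<le> z")
      case True thus ?thesis using inc'[of v z] v by simp
    next
      case False thus ?thesis using dec'[of z v] v by simp
    qed
  qed
  define S where "S = {q \<in> ellipse a. P (dist c q)}"
  show ?thesis
  proof (cases "P (dist c (Q z))")
    case True
    have "S = ellipse a" using P[OF maxz True] by (auto simp: S_def)
    thus ?thesis by (simp add: S_def)
  next
    case False
    define J where "J = {v. z - pi \<le> v \<and> v \<le> z \<and> P (dist c (Q v))}"
    have Qm: "Q (v - pi) = Q v" for v using Qper[of "v - pi"] by simp
    have SJ: "S = Q ` J"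
    proof
      show "S \<subseteq> Q ` J"
      proof
        fix q assume q: "q \<in> S"
        have qY: "q \<in> ellipse a" using q by (simp add: S_def)
        obtain v where v: "0 \<le> v" "v < pi" "q = Q v" using cover[OF qY] by blast
        show "q \<in> Q ` J"
        proof (cases "v \<le> z")
          case True
          hence "v \<in> J" using v q z by (auto simp: J_def S_def)
          thus ?thesis using v by blast
        next
          case False
          hence "v - pi \<in> J" using v q z Qm[of v] by (auto simp: J_def S_def)
          thus ?thesis using v Qm[of v] by (metis image_eqI)
        qed
      qed
      show "Q ` J \<subseteq> S" using Qe by (auto simp: J_def S_def)
    qed
    have "is_interval J"
      unfolding is_interval_1
    proof (intro ballI allI impI)
      fix x y t assume x: "x \<in> J" and y: "y \<in> J" and t: "x \<le> t \<and> t \<le> y"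
      have "P (dist c (Q t))"
      proof (cases "0 \<le> t")
        case True
        have "dist c (Q t) \<le> dist c (Q y)" using inc'[of t y] True t y by (auto simp: J_def)
        thus ?thesis using P y by (auto simp: J_def)
      next
        case False
        have "dist c (Q (t + pi)) \<le> dist c (Q (x + pi))"
          using dec'[of "x + pi" "t + pi"] False t x by (auto simp: J_def)
        hence "dist c (Q t) \<le> dist c (Q x)" by (simp add: Qper)
        thus ?thesis using P x by (auto simp: J_def)
      qed
      thus "t \<in> J" using x y t by (auto simp: J_def)
    qed
    hence "connected J" by (simp only: is_interval_connected_1)
    hence "connected S" unfolding SJ
      by (rule connected_continuous_image[OF continuous_on_subset[OF Qc subset_UNIV]])
    moreover have "S \<subseteq> ellipse a - {Q z}" using False by (auto simp: S_def)
    ultimately have "contractible S" using a1 Qe[of z] by (intro ell_contr[of a "Q z"]) auto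
    thus ?thesis by (simp add: S_def)
  qed
qed



theorem mainTheorem15:
  fixes a :: real and p :: "real \<times> real"
  assumes "1 < a" and "a \<le> sqrt 2" and "p \<in> ellipse a"
  shows "(\<forall>q\<in>ellipse a. local_min_on (ellipse a) (dist p) q \<longleftrightarrow> q = p)
       \<and> (\<forall>q\<in>ellipse a. local_max_on (ellipse a) (dist p) q \<longleftrightarrow> q = ell_hinv a p)
       \<and> (\<forall>q\<in>ellipse a. dist p p \<le> dist p q \<and> dist p q \<le> dist p (ell_hinv a p))
       \<and> (\<forall>c\<in>ellipse a. \<forall>r. ellipse a \<inter> ball c r \<noteq> {} \<longrightarrow>
            contractible (ellipse a \<inter> ball c r) \<or> ellipse a \<inter> ball c r = ellipse a)
       \<and> (\<forall>c\<in>ellipse a. \<forall>r. ellipse a \<inter> cball c r \<noteq> {} \<longrightarrow>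
            contractible (ellipse a \<inter> cball c r) \<or> ellipse a \<inter> cball c r = ellipse a)"
proof -
  note a1 = assms(1) and a2 = assms(2) and p = assms(3)
  have a0: "a > 0" using a1 by simp
  obtain Q z where
   Qc: "continuous_on UNIV Q" and Qe: "\<And>v. Q v \<in> ellipse a" and Qper: "\<And>v. Q (v + pi) = Q v"
   and Q0: "Q 0 = p" and z: "0 < z" "z < pi"
   and cover: "\<And>q. q \<in> ellipse a \<Longrightarrow> \<exists>v. 0 \<le> v \<and> v < pi \<and> q = Q v"
   and inc: "\<And>x y. 0 \<le> x \<Longrightarrow> x < y \<Longrightarrow> y \<le> z \<Longrightarrow> dist p (Q x) < dist p (Q y)"
   and dec: "\<And>x y. z \<le> x \<Longrightarrow> x < y \<Longrightarrow> y \<le> pi \<Longrightarrow> dist p (Q y) < dist p (Q x)"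
   and nz: "\<And>v. 0 < v \<Longrightarrow> v < pi \<Longrightarrow> p \<in> normal_line a (Q v) \<Longrightarrow> v = z"
   and nlz: "p \<in> normal_line a (Q z)"
    by (rule core[OF a1 a2 p]) blast
  have Qpi: "Q pi = p" using Qper[of 0] Q0 by simp
  have pos: "dist p (Q v) > 0" if "0 < v" "v < pi" for v
  proof (cases "v \<le> z")
    case True thus ?thesis using inc[of 0 v] that Q0 by simp
  next
    case False thus ?thesis using dec[of v pi] that Qpi by simp
  qed
  have cover': "\<exists>v. 0 < v \<and> v < pi \<and> q = Q v" if qq: "q \<in> ellipse a" "q \<noteq> p" for q
  proof -
    obtain v where v: "0 \<le> v" "v < pi" "q = Q v" using cover[OF qq(1)] by blast
    have "v \<noteq> 0" using v qq(2) Q0 by auto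
    thus ?thesis using v by (intro exI[of _ v]) auto
  qed
  have maxz: "dist p q \<le> dist p (Q z)" if qY: "q \<in> ellipse a" for q
  proof -
    obtain v where v: "0 \<le> v" "v < pi" "q = Q v" using cover[OF qY] by blast
    show ?thesis
    proof (cases "v < z")
      case True thus ?thesis using inc[of v z] v by simp
    next
      case False
      show ?thesis
      proof (cases "v = z")
        case True thus ?thesis using v by simp
      next
        case False thus ?thesis using dec[of z v] v \<open>\<not> v < z\<close> by simp
      qed
    qed
  qed
  have Qzp: "Q z \<noteq> p" using pos[of z] z by auto
  have hQ: "ell_h a (Q z) = p"
    unfolding ell_h_def
  proof (rule the1_equality[OF normal_unique[OF a0 Qe[of z]]])
    show "p \<in> ellipse a \<and> p \<noteq> Q z \<and> p \<in> normal_line a (Q z)" using p Qzp nlz by auto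
  qed
  have hx: "x = Q z" if x: "x \<in> ellipse a" "ell_h a x = p" for x
  proof -
    have "ell_h a x \<in> ellipse a \<and> ell_h a x \<noteq> x \<and> ell_h a x \<in> normal_line a x"
      unfolding ell_h_def by (rule theI'[OF normal_unique[OF a0 x(1)]])
    hence pn: "p \<noteq> x" "p \<in> normal_line a x" using x(2) by auto
    obtain v where v: "0 < v" "v < pi" "x = Q v" using cover'[OF x(1)] pn(1) by auto
    thus ?thesis using nz[of v] pn(2) by simp
  qed
  have hinv: "ell_hinv a p = Q z"
  proof -
    have "ell_hinv a p = (SOME x. x \<in> ellipse a \<and> ell_h a x = p)"
      by (simp add: ell_hinv_def inv_into_def)
    also have "\<dots> = Q z"
    proof (rule someI2[of _ "Q z"])
      show "Q z \<in> ellipse a \<and> ell_h a (Q z) = p" using Qe hQ by simp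
      show "x = Q z" if "x \<in> ellipse a \<and> ell_h a x = p" for x using hx that by blast
    qed
    finally show ?thesis .
  qed
  have lmin: "local_min_on (ellipse a) (dist p) q \<longleftrightarrow> q = p" if qY: "q \<in> ellipse a" for q
  proof
    assume "q = p"
    thus "local_min_on (ellipse a) (dist p) q" using qY
      unfolding local_min_on_def by (intro conjI exI[of _ 1]) auto
  next
    assume lm: "local_min_on (ellipse a) (dist p) q"
    show "q = p"
    proof (rule ccontr)
      assume qp: "q \<noteq> p"
      obtain e where e: "e > 0" "\<And>q'. q' \<in> ellipse a \<Longrightarrow> dist q' q < e \<Longrightarrow> dist p q \<le> dist p q'"
        using lm unfolding local_min_on_def by blast
      obtain v where v: "0 < v" "v < pi" "q = Q v" using cover'[OF qY qp] by blast
      obtain d where d: "d > 0" "\<And>w. \<bar>w - v\<bar> < d \<Longrightarrow> dist (Q w) (Q v) < e"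
        using near[OF Qc e(1), of v] by blast
      show False
      proof (cases "v \<le> z")
        case True
        define w where "w = v - min (d/2) (v/2)"
        have m: "min (d/2) (v/2) \<le> d/2" "min (d/2) (v/2) \<le> v/2" by (rule min.cobounded1, rule min.cobounded2)
        have w: "0 \<le> w" "w < v" "\<bar>w - v\<bar> < d" using m d v by (auto simp: w_def)
        have "dist p (Q w) < dist p (Q v)" using inc[of w v] w True by simp
        moreover have "dist p q \<le> dist p (Q w)" using e(2)[OF Qe[of w]] d(2)[OF w(3)] v by simp
        ultimately show False using v by simp
      next
        case False
        define w where "w = v + min (d/2) ((pi - v)/2)"
        have m: "min (d/2) ((pi - v)/2) \<le> d/2" "min (d/2) ((pi - v)/2) \<le> (pi - v)/2" by (rule min.cobounded1, rule min.cobounded2)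
        have w: "w \<le> pi" "v < w" "\<bar>w - v\<bar> < d" using m d v by (auto simp: w_def)
        have "dist p (Q w) < dist p (Q v)" using dec[of v w] w False by simp
        moreover have "dist p q \<le> dist p (Q w)" using e(2)[OF Qe[of w]] d(2)[OF w(3)] v by simp
        ultimately show False using v by simp
      qed
    qed
  qed
  have lmax: "local_max_on (ellipse a) (dist p) q \<longleftrightarrow> q = Q z" if qY: "q \<in> ellipse a" for q
  proof
    assume "q = Q z"
    thus "local_max_on (ellipse a) (dist p) q" using qY maxz
      unfolding local_max_on_def by (intro conjI exI[of _ 1]) auto
  next
    assume lm: "local_max_on (ellipse a) (dist p) q"
    obtain e where e: "e > 0" "\<And>q'. q' \<in> ellipse a \<Longrightarrow> dist q' q < e \<Longrightarrow> dist p q' \<le> dist p q"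
      using lm unfolding local_max_on_def by blast
    obtain v where v: "0 \<le> v" "v < pi" "q = Q v" using cover[OF qY] by blast
    obtain d where d: "d > 0" "\<And>w. \<bar>w - v\<bar> < d \<Longrightarrow> dist (Q w) (Q v) < e"
      using near[OF Qc e(1), of v] by blast
    show "q = Q z"
    proof (cases "v < z")
      case True
      define w where "w = v + min (d/2) ((z - v)/2)"
      have m: "min (d/2) ((z - v)/2) \<le> d/2" "min (d/2) ((z - v)/2) \<le> (z - v)/2" by (rule min.cobounded1, rule min.cobounded2)
      have "0 < min (d/2) ((z - v)/2)" using d True by simp
      hence w: "w \<le> z" "v < w" "\<bar>w - v\<bar> < d" using m d v by (auto simp: w_def)
      have "dist p (Q v) < dist p (Q w)" using inc[of v w] w v by simp
      moreover have "dist p (Q w) \<le> dist p q" using e(2)[OF Qe[of w]] d(2)[OF w(3)] v by simp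
      ultimately show ?thesis using v by simp
    next
      case False
      show ?thesis
      proof (cases "v = z")
        case True thus ?thesis using v by simp
      next
        case False
        hence vz: "z < v" using \<open>\<not> v < z\<close> by simp
        define w where "w = v - min (d/2) ((v - z)/2)"
        have m: "min (d/2) ((v - z)/2) \<le> d/2" "min (d/2) ((v - z)/2) \<le> (v - z)/2" by (rule min.cobounded1, rule min.cobounded2)
        have "0 < min (d/2) ((v - z)/2)" using d vz by simp
        hence w: "z \<le> w" "w < v" "\<bar>w - v\<bar> < d" using m d v by (auto simp: w_def)
        have "dist p (Q v) < dist p (Q w)" using dec[of w v] w v by simp
        moreover have "dist p (Q w) \<le> dist p q" using e(2)[OF Qe[of w]] d(2)[OF w(3)] v by simp
        ultimately show ?thesis using v by simp
      qed
    qed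
  qed
  have ballc: "contractible (ellipse a \<inter> ball c r) \<or> ellipse a \<inter> ball c r = ellipse a"
    if c: "c \<in> ellipse a" for c r
  proof -
    have "ellipse a \<inter> ball c r = {q \<in> ellipse a. dist c q < r}" by (auto simp: ball_def)
    thus ?thesis using sublevel[OF a1 a2 c, of "\<lambda>t. t < r"] by simp
  qed
  have cballc: "contractible (ellipse a \<inter> cball c r) \<or> ellipse a \<inter> cball c r = ellipse a"
    if c: "c \<in> ellipse a" for c r
  proof -
    have "ellipse a \<inter> cball c r = {q \<in> ellipse a. dist c q \<le> r}" by (auto simp: cball_def)
    thus ?thesis using sublevel[OF a1 a2 c, of "\<lambda>t. t \<le> r"] by simp
  qed
  show ?thesis
    using lmin lmax maxz ballc cballc by (simp add: hinv)
qed


end
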